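(* Let $K\subseteq\mathbb R^2$ be a compact set containing no array on three points, let $f\in C(K)$ and $\varepsilon>0$. Then there exist continuous functions $g,h\in C(\mathbb R)$ such that (1) $|f(x,y)-g(x)-h(y)|\le 6\varepsilon$ for all $(x,y)\in K$, and (2) $\|g\|\le\|f\|$ and $\|h\|\le 2\|f\|$.
   Context: An array on three points is a triple $a_1,a_2,a_3$ of points in the plane with $a_1\ne a_2$, $a_2\ne a_3$, such that the segments $[a_1;a_2]$ and $[a_2;a_3]$ are each parallel to a coordinate axis and are mutually orthogonal. $\|\cdot\|$ denotes the supremum norm (on $K$ for $f$, on $\mathbb R$ for $g,h$). *)

theory Defs
  imports "HOL-Analysis.Analysis"
begin

definition vertical_seg :: "real \<times> real \<Rightarrow> real \<times> real \<Rightarrow> bool" where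
  "vertical_seg p q \<longleftrightarrow> p \<noteq> q \<and> fst p = fst q"

definition horizontal_seg :: "real \<times> real \<Rightarrow> real \<times> real \<Rightarrow> bool" where
  "horizontal_seg p q \<longleftrightarrow> p \<noteq> q \<and> snd p = snd q"

definition is_array3 :: "real \<times> real \<Rightarrow> real \<times> real \<Rightarrow> real \<times> real \<Rightarrow> bool" where
  "is_array3 a1 a2 a3 \<longleftrightarrow>
     (vertical_seg a1 a2 \<and> horizontal_seg a2 a3) \<or> (horizontal_seg a1 a2 \<and> vertical_seg a2 a3)"

definition contains_array3 :: "(real \<times> real) set \<Rightarrow> bool" where
  "contains_array3 K \<longleftrightarrow> (\<exists>a1\<in>K. \<exists>a2\<in>K. \<exists>a3\<in>K. is_array3 a1 a2 a3)"

definition sup_norm_on :: "'a set \<Rightarrow> ('a \<Rightarrow> real) \<Rightarrow> real" where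
  "sup_norm_on S f = (if S = {} then 0 else (SUP x\<in>S. \<bar>f x\<bar>))"

end

theory Submission
  imports Defs
begin

lemma sat_urysohn:
  fixes K :: "(real \<times> real) set" and R :: "real \<times> real \<Rightarrow> real \<times> real \<Rightarrow> bool"
  assumes K: "compact K"
    and refl: "\<And>p. p \<in> K \<Longrightarrow> R p p"
    and sym: "\<And>p q. p \<in> K \<Longrightarrow> q \<in> K \<Longrightarrow> R p q \<Longrightarrow> R q p"
    and trans: "\<And>p q r. p \<in> K \<Longrightarrow> q \<in> K \<Longrightarrow> r \<in> K \<Longrightarrow> R p q \<Longrightarrow> R q r \<Longrightarrow> R p r"
    and satc: "\<And>F. compact F \<Longrightarrow> F \<subseteq> K \<Longrightarrow> closed {p\<in>K. \<exists>q\<in>F. R p q}"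
    and C1: "closed C1" "C1 \<subseteq> K" "\<And>p q. p \<in> C1 \<Longrightarrow> q \<in> K \<Longrightarrow> R p q \<Longrightarrow> q \<in> C1"
    and C2: "closed C2" "C2 \<subseteq> K" "\<And>p q. p \<in> C2 \<Longrightarrow> q \<in> K \<Longrightarrow> R p q \<Longrightarrow> q \<in> C2"
    and disj: "C1 \<inter> C2 = {}"
  shows "\<exists>l::real\<times>real\<Rightarrow>real. continuous_on K l \<and> (\<forall>p\<in>K. 0 \<le> l p \<and> l p \<le> 1) \<and> (\<forall>p\<in>C1. l p = 0)
            \<and> (\<forall>p\<in>C2. l p = 1) \<and> (\<forall>p\<in>K. \<forall>q\<in>K. R p q \<longrightarrow> l p = l q)"
proof -
  define P where "P = (\<lambda>U. openin (top_of_set K) U \<and> (\<forall>p\<in>U. \<forall>q\<in>K. R p q \<longrightarrow> q \<in> U))"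
  have isT: "istopology P"
    unfolding istopology_def P_def by (auto simp: openin_Int openin_Union)
  define T where "T = topology P"
  have opT: "openin T = P" unfolding T_def using isT by simp
  have PK: "P U \<Longrightarrow> U \<subseteq> K" for U unfolding P_def by (meson openin_imp_subset)
  have "P K" unfolding P_def by auto
  have topT: "topspace T = K"
    unfolding topspace_def opT using PK \<open>P K\<close> by blast
  have closedT: "closedin T S" if "closed S" "S \<subseteq> K" "\<And>p q. p \<in> S \<Longrightarrow> q \<in> K \<Longrightarrow> R p q \<Longrightarrow> q \<in> S" for S
  proof -
    have "openin (top_of_set K) (K - S)"
      using that(1) by (simp add: closed_subset openin_diff that(2))
    moreover have "\<forall>p\<in>K - S. \<forall>q\<in>K. R p q \<longrightarrow> q \<in> K - S"
      using that sym by blast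
    ultimately show ?thesis
      unfolding closedin_def topT opT P_def using that(2) by auto
  qed
  have closedT_D: "closed S \<and> S \<subseteq> K \<and> (\<forall>p\<in>S. \<forall>q\<in>K. R p q \<longrightarrow> q \<in> S)" if "closedin T S" for S
  proof -
    have S: "S \<subseteq> K" "P (K - S)" using that unfolding closedin_def topT opT by auto
    then have "closedin (top_of_set K) S"
      unfolding P_def by (metis Diff_Diff_Int closedin_def inf.absorb_iff2 topspace_euclidean_subtopology)
    then have "closed S" using K by (meson closedin_closed_trans compact_imp_closed)
    moreover have "\<forall>p\<in>S. \<forall>q\<in>K. R p q \<longrightarrow> q \<in> S"
      using S(2) sym unfolding P_def using S(1) by blast
    ultimately show ?thesis using S by blast
  qed
  have normal: "normal_space T"
    unfolding normal_space_def
  proof clarify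
    fix S S'
    assume a: "closedin T S" "closedin T S'" "disjnt S S'"
    note s1 = closedT_D[OF a(1)] and s2 = closedT_D[OF a(2)]
    obtain V V' where V: "open V" "open V'" "S \<subseteq> V" "S' \<subseteq> V'" "V \<inter> V' = {}"
      using separation_normal[of S S'] s1 s2 a(3) by (auto simp: disjnt_def)
    have mk: "\<exists>U. openin T U \<and> S \<subseteq> U \<and> U \<subseteq> V"
      if "open V" "S \<subseteq> V" "closed S \<and> S \<subseteq> K \<and> (\<forall>p\<in>S. \<forall>q\<in>K. R p q \<longrightarrow> q \<in> S)" for S V
    proof -
      define F where "F = K - V"
      have "compact F" unfolding F_def using K \<open>open V\<close>
        by (simp add: Diff_eq closed_Compl compact_Int_closed)
      then have cl: "closed {p\<in>K. \<exists>q\<in>F. R p q}" using satc F_def by auto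
      define U where "U = K - {p\<in>K. \<exists>q\<in>F. R p q}"
      have "openin (top_of_set K) U" unfolding U_def using cl
        by (simp add: closed_subset openin_diff)
      moreover have "\<forall>p\<in>U. \<forall>q\<in>K. R p q \<longrightarrow> q \<in> U"
        unfolding U_def F_def using trans by blast
      ultimately have "openin T U" unfolding opT P_def by auto
      moreover have "S \<subseteq> U" unfolding U_def F_def using that by blast
      moreover have "U \<subseteq> V" unfolding U_def F_def using refl by blast
      ultimately show ?thesis by blast
    qed
    obtain U where U: "openin T U" "S \<subseteq> U" "U \<subseteq> V" using mk[OF V(1) V(3) s1] by blast
    obtain U' where U': "openin T U'" "S' \<subseteq> U'" "U' \<subseteq> V'" using mk[OF V(2) V(4) s2] by blast
    show "\<exists>U V. openin T U \<and> openin T V \<and> S \<subseteq> U \<and> S' \<subseteq> V \<and> disjnt U V"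
      proof (intro exI conjI)
      show "disjnt U U'" using U(3) U'(3) V(5) unfolding disjnt_def by blast
    qed (use U U' in auto)
  qed
  have c1: "closedin T C1" by (rule closedT) (use C1 in auto)
  have c2: "closedin T C2" by (rule closedT) (use C2 in auto)
  have dj: "disjnt C1 C2" using disj by (simp add: disjnt_def)
  obtain l where l: "continuous_map T (top_of_set {0..1::real}) l" "l ` C1 \<subseteq> {0}" "l ` C2 \<subseteq> {1}"
    using Urysohn_lemma[OF normal c1 c2 dj, of 0 1] by auto
  have lr: "continuous_map T euclideanreal l" and lK: "\<forall>p\<in>K. 0 \<le> l p \<and> l p \<le> 1"
    using l(1) topT by (auto simp: continuous_map_in_subtopology)
  have "continuous_map (top_of_set K) euclideanreal l"
    unfolding continuous_map_def
  proof safe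
    fix U :: "real set" assume "openin euclideanreal U"
    then have "openin T {x \<in> topspace T. l x \<in> U}" by (rule openin_continuous_map_preimage[OF lr])
    then have "P {x \<in> K. l x \<in> U}" using opT topT by simp
    then show "openin (top_of_set K) {x \<in> topspace (top_of_set K). l x \<in> U}"
      unfolding P_def by simp
  qed simp
  then have cont: "continuous_on K l" by simp
  have const: "l p = l q" if "p \<in> K" "q \<in> K" "R p q" for p q
  proof (rule ccontr)
    assume ne: "l p \<noteq> l q"
    define U where "U = ball (l p) (dist (l p) (l q))"
    have "openin T {x \<in> topspace T. l x \<in> U}"
      by (rule openin_continuous_map_preimage[OF lr]) (simp add: U_def)
    then have "P {x \<in> K. l x \<in> U}" using opT topT by simp
    moreover have "p \<in> {x \<in> K. l x \<in> U}" using that ne by (simp add: U_def)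
    ultimately have "q \<in> {x \<in> K. l x \<in> U}" unfolding P_def using that(2,3) by (metis (no_types, lifting))
    then show False by (simp add: U_def dist_commute)
  qed
  have "continuous_on K l \<and> (\<forall>p\<in>K. 0 \<le> l p \<and> l p \<le> 1) \<and> (\<forall>p\<in>C1. l p = 0)
            \<and> (\<forall>p\<in>C2. l p = 1) \<and> (\<forall>p\<in>K. \<forall>q\<in>K. R p q \<longrightarrow> l p = l q)"
    using cont lK l(2,3) const by auto
  then show ?thesis by (rule exI[where x=l])
qed

lemma approx_fun:
  fixes D :: "(real \<times> real) set" and e e' B :: real
  assumes D: "compact D" "D \<noteq> {}"
    and fib: "\<And>a b. a \<in> D \<Longrightarrow> b \<in> D \<Longrightarrow> fst a = fst b \<Longrightarrow> \<bar>snd a - snd b\<bar> \<le> e"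
    and e': "e' > 0" and bd: "\<And>a. a \<in> D \<Longrightarrow> \<bar>snd a\<bar> \<le> B"
  shows "\<exists>G::real\<Rightarrow>real. continuous_on UNIV G \<and> (\<forall>x. \<bar>G x\<bar> \<le> B) \<and> (\<forall>a\<in>D. \<bar>G (fst a) - snd a\<bar> \<le> e + e')"
proof -
  obtain a0 where a0: "a0 \<in> D" using D(2) by blast
  have B0: "0 \<le> B" using bd[OF a0] by linarith
  have e0: "0 \<le> e" using fib[OF a0 a0] by simp
  define Z where "Z = {z \<in> D \<times> D. snd (fst z) + e + e' \<le> snd (snd z)}"
  have "closed {z::(real\<times>real)\<times>(real\<times>real). snd (fst z) + e + e' \<le> snd (snd z)}"
    by (intro closed_Collect_le continuous_intros)
  moreover have "Z = (D \<times> D) \<inter> {z::(real\<times>real)\<times>(real\<times>real). snd (fst z) + e + e' \<le> snd (snd z)}"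
    unfolding Z_def by blast
  ultimately have cZ: "compact Z" using compact_Times[OF D(1) D(1)]
    by (simp add: compact_Int_closed)
  obtain r where r: "r > 0" "\<And>a b. a \<in> D \<Longrightarrow> b \<in> D \<Longrightarrow> \<bar>fst a - fst b\<bar> < r \<Longrightarrow> snd b < snd a + e + e'"
  proof (cases "Z = {}")
    case True
    show ?thesis
    proof (rule that[of 1])
      fix a b assume ab: "a \<in> D" "b \<in> D"
      have "(a, b) \<notin> Z" using True by blast
      then show "snd b < snd a + e + e'" using ab unfolding Z_def by auto
    qed simp
  next
    case False
    have "continuous_on Z (\<lambda>z. \<bar>fst (fst z) - fst (snd z)\<bar>)"
      by (intro continuous_intros)
    then obtain z where z: "z \<in> Z" "\<And>w. w \<in> Z \<Longrightarrow> \<bar>fst (fst z) - fst (snd z)\<bar> \<le> \<bar>fst (fst w) - fst (snd w)\<bar>"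
      using continuous_attains_inf[OF cZ False] by blast
    have "\<bar>fst (fst z) - fst (snd z)\<bar> > 0"
    proof (rule ccontr)
      assume "\<not> ?thesis"
      then have "fst (fst z) = fst (snd z)" by simp
      then have "\<bar>snd (fst z) - snd (snd z)\<bar> \<le> e" using fib z(1) unfolding Z_def by auto
      then show False using z(1) e' unfolding Z_def by auto
    qed
    then show ?thesis
    proof (rule that)
      fix a b assume ab: "a \<in> D" "b \<in> D" "\<bar>fst a - fst b\<bar> < \<bar>fst (fst z) - fst (snd z)\<bar>"
      show "snd b < snd a + e + e'"
      proof (rule ccontr)
        assume "\<not> ?thesis"
        then have "(a, b) \<in> Z" unfolding Z_def using ab by auto
        from z(2)[OF this] ab(3) show False by simp
      qed
    qed
  qed
  define L where "L = 2 * B / r"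
  have L0: "0 \<le> L" unfolding L_def using B0 r(1) by simp
  have Lr: "L * r = 2 * B" unfolding L_def using r(1) by simp
  define G0 where "G0 = (\<lambda>y. SUP a\<in>D. snd a - L * \<bar>y - fst a\<bar>)"
  have bdd: "bdd_above ((\<lambda>a. snd a - L * \<bar>y - fst a\<bar>) ` D)" for y
  proof (rule bdd_aboveI2)
    fix a assume "a \<in> D"
    then show "snd a - L * \<bar>y - fst a\<bar> \<le> B" using bd[of a] L0
      by (smt (verit, best) mult_nonneg_nonneg)
  qed
  have up: "snd a - L * \<bar>y - fst a\<bar> \<le> G0 y" if "a \<in> D" for a y
    unfolding G0_def by (rule cSUP_upper[OF that bdd])
  have lip: "G0 y \<le> G0 y' + L * \<bar>y - y'\<bar>" for y y'
  proof -
  have "(SUP a\<in>D. snd a - L * \<bar>y - fst a\<bar>) \<le> G0 y' + L * \<bar>y - y'\<bar>"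
  proof (rule cSUP_least[OF D(2)])
    fix a assume a: "a \<in> D"
    have "\<bar>y' - fst a\<bar> \<le> \<bar>y - fst a\<bar> + \<bar>y - y'\<bar>" by arith
    then have "L * \<bar>y' - fst a\<bar> \<le> L * (\<bar>y - fst a\<bar> + \<bar>y - y'\<bar>)"
      using L0 by (rule mult_left_mono)
    then have "L * \<bar>y' - fst a\<bar> \<le> L * \<bar>y - fst a\<bar> + L * \<bar>y - y'\<bar>"
      by (simp add: distrib_left)
    then show "snd a - L * \<bar>y - fst a\<bar> \<le> G0 y' + L * \<bar>y - y'\<bar>"
      using up[OF a, of y'] by linarith
  qed
  then show ?thesis by (simp add: G0_def)
  qed
  have contG0: "continuous_on UNIV G0"
  proof (rule lipschitz_on_continuous_on)
    show "L-lipschitz_on UNIV G0"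
      unfolding lipschitz_on_def dist_real_def using L0 lip
      by (smt (verit, best) abs_minus_commute)
  qed
  have G0a: "\<bar>G0 (fst a) - snd a\<bar> \<le> e + e'" if a: "a \<in> D" for a
  proof -
    have "snd a \<le> G0 (fst a)" using up[OF a, of "fst a"] by simp
    moreover have "G0 (fst a) \<le> snd a + e + e'"
      unfolding G0_def
    proof (rule cSUP_least[OF D(2)])
      fix b assume b: "b \<in> D"
      show "snd b - L * \<bar>fst a - fst b\<bar> \<le> snd a + e + e'"
      proof (cases "\<bar>fst a - fst b\<bar> < r")
        case True
        then show ?thesis using r(2)[OF a b] L0 by (smt (verit) mult_nonneg_nonneg abs_ge_zero)
      next
        case False
        then have "L * r \<le> L * \<bar>fst a - fst b\<bar>" using L0 by (simp add: mult_left_mono)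
        then show ?thesis using Lr bd[OF a] bd[OF b] e0 e' by linarith
      qed
    qed
    ultimately show ?thesis by linarith
  qed
  define G where "G = (\<lambda>y. max (- B) (min B (G0 y)))"
  have "continuous_on UNIV G" unfolding G_def
    by (intro continuous_on_max continuous_on_min continuous_on_const contG0)
  moreover have "\<forall>x. \<bar>G x\<bar> \<le> B" unfolding G_def using B0 by auto
  moreover have "\<forall>a\<in>D. \<bar>G (fst a) - snd a\<bar> \<le> e + e'"
  proof
    fix a assume a: "a \<in> D"
    show "\<bar>G (fst a) - snd a\<bar> \<le> e + e'"
      using G0a[OF a] bd[OF a] unfolding G_def by (auto simp: max_def min_def abs_le_iff)
  qed
  ultimately show ?thesis by (intro exI[where x=G]) simp
qed

lemma arr_contra1:
  assumes "\<not> contains_array3 K" "u \<in> K" "p \<in> K" "q \<in> K" "u \<noteq> p" "fst u = fst p" "p \<noteq> q" "snd p = snd q"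
  shows False
  using assms unfolding contains_array3_def is_array3_def vertical_seg_def horizontal_seg_def by blast

lemma arr_contra2:
  assumes "\<not> contains_array3 K" "u \<in> K" "p \<in> K" "q \<in> K" "u \<noteq> p" "snd u = snd p" "p \<noteq> q" "fst p = fst q"
  shows False
  using assms unfolding contains_array3_def is_array3_def vertical_seg_def horizontal_seg_def by blast

lemma scale_le:
  fixes c x y e :: real
  assumes "0 \<le> c" "c \<le> 1" "\<bar>x - y\<bar> \<le> e"
  shows "\<bar>c * x - c * y\<bar> \<le> e"
proof -
  have "\<bar>c * x - c * y\<bar> = c * \<bar>x - y\<bar>"
    using assms(1) by (simp add: abs_mult right_diff_distrib[symmetric])
  also have "\<dots> \<le> \<bar>x - y\<bar>" using assms(1,2) by (simp add: mult_left_le_one_le)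
  finally show ?thesis using assms(3) by linarith
qed

theorem mainTheorem6:
  fixes K :: "(real \<times> real) set" and f :: "real \<times> real \<Rightarrow> real" and \<epsilon> :: real
  assumes "compact K" and "\<not> contains_array3 K" and "continuous_on K f" and "\<epsilon> > 0"
  shows "\<exists>g h :: real \<Rightarrow> real. continuous_on UNIV g \<and> continuous_on UNIV h \<and>
           (\<forall>(x, y)\<in>K. \<bar>f (x, y) - g x - h y\<bar> \<le> 6 * \<epsilon>) \<and>
           bounded (range g) \<and> bounded (range h) \<and>
           sup_norm_on UNIV g \<le> sup_norm_on K f \<and>
           sup_norm_on UNIV h \<le> 2 * sup_norm_on K f"
proof (cases "K = {}")
  case True
  have "continuous_on UNIV (\<lambda>_::real. 0::real) \<and> continuous_on UNIV (\<lambda>_::real. 0::real) \<and>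
           (\<forall>(x, y)\<in>K. \<bar>f (x, y) - 0 - 0\<bar> \<le> 6 * \<epsilon>) \<and>
           bounded (range (\<lambda>_::real. 0::real)) \<and> bounded (range (\<lambda>_::real. 0::real)) \<and>
           sup_norm_on UNIV (\<lambda>_::real. 0::real) \<le> sup_norm_on K f \<and>
           sup_norm_on UNIV (\<lambda>_::real. 0::real) \<le> 2 * sup_norm_on K f"
    using True by (simp add: sup_norm_on_def)
  then show ?thesis by (intro exI[where x="\<lambda>_::real. 0::real"])
next
  case Kne: False
  note K = assms(1) and noarr = assms(2) and fc = assms(3) and ep = assms(4)
  define M where "M = sup_norm_on K f"
  have M_eq: "M = (SUP p\<in>K. \<bar>f p\<bar>)" unfolding M_def sup_norm_on_def using Kne by simp
  have "compact ((\<lambda>p. \<bar>f p\<bar>) ` K)"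
    by (rule compact_continuous_image[OF _ K]) (intro continuous_intros fc)
  then have bddf: "bdd_above ((\<lambda>p. \<bar>f p\<bar>) ` K)"
    by (simp add: bounded_imp_bdd_above compact_imp_bounded)
  have fM: "\<bar>f p\<bar> \<le> M" if "p \<in> K" for p
    unfolding M_eq by (rule cSUP_upper[OF that bddf])
  obtain \<delta> where d: "\<delta> > 0" "\<And>p q. p \<in> K \<Longrightarrow> q \<in> K \<Longrightarrow> dist p q < \<delta> \<Longrightarrow> \<bar>f p - f q\<bar> < \<epsilon>"
  proof -
    have "uniformly_continuous_on K f" using compact_uniformly_continuous[OF fc K] .
    then obtain d where "d > 0" "\<forall>x\<in>K. \<forall>x'\<in>K. dist x' x < d \<longrightarrow> dist (f x') (f x) < \<epsilon>"
      unfolding uniformly_continuous_on_def using ep by blast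
    then show ?thesis using that[of d] by (simp add: dist_real_def)
  qed
  define R where "R = (\<lambda>p q::real\<times>real. fst p = fst q \<or> snd p = snd q)"
  have Rtrans: "R p r" if "p \<in> K" "q \<in> K" "r \<in> K" "R p q" "R q r" for p q r
  proof (cases "p = q \<or> q = r")
    case True then show ?thesis using that by auto
  next
    case False
    then show ?thesis
      using that arr_contra1[OF noarr that(1,2,3)] arr_contra2[OF noarr that(1,2,3)]
      unfolding R_def by auto
  qed
  have satc: "closed {p\<in>K. \<exists>q\<in>F. R p q}" if "compact F" "F \<subseteq> K" for F
  proof -
    have "{p\<in>K. \<exists>q\<in>F. R p q} = K \<inter> ((fst ` F) \<times> UNIV \<union> UNIV \<times> (snd ` F))"
      unfolding R_def by force
    moreover have "closed (fst ` F)" "closed (snd ` F)"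
      using that(1) by (auto intro!: compact_imp_closed compact_continuous_image continuous_intros)
    ultimately show ?thesis using K
      by (simp add: closed_Int closed_Times closed_Un compact_imp_closed)
  qed
  define W1 where "W1 = {z \<in> K \<times> K. fst (fst z) = fst (snd z) \<and> \<delta> \<le> dist (fst z) (snd z)}"
  define W2 where "W2 = {z \<in> K \<times> K. snd (fst z) = snd (snd z) \<and> \<delta> \<le> dist (fst z) (snd z)}"
  have "closed {z::(real\<times>real)\<times>(real\<times>real). fst (fst z) = fst (snd z)}"
    by (intro closed_Collect_eq continuous_intros)
  moreover have "closed {z::(real\<times>real)\<times>(real\<times>real). \<delta> \<le> dist (fst z) (snd z)}"
    by (intro closed_Collect_le continuous_intros)
  moreover have "W1 = (K \<times> K) \<inter> ({z. fst (fst z) = fst (snd z)} \<inter> {z. \<delta> \<le> dist (fst z) (snd z)})"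
    unfolding W1_def by blast
  ultimately have cW1: "compact W1" using compact_Times[OF K K]
    by (simp add: compact_Int_closed closed_Int)
  have "closed {z::(real\<times>real)\<times>(real\<times>real). snd (fst z) = snd (snd z)}"
    by (intro closed_Collect_eq continuous_intros)
  moreover have "closed {z::(real\<times>real)\<times>(real\<times>real). \<delta> \<le> dist (fst z) (snd z)}"
    by (intro closed_Collect_le continuous_intros)
  moreover have "W2 = (K \<times> K) \<inter> ({z. snd (fst z) = snd (snd z)} \<inter> {z. \<delta> \<le> dist (fst z) (snd z)})"
    unfolding W2_def by blast
  ultimately have cW2: "compact W2" using compact_Times[OF K K]
    by (simp add: compact_Int_closed closed_Int)
  define Xd where "Xd = (\<lambda>z. fst (fst z)) ` W1"
  define Yd where "Yd = (\<lambda>z. snd (fst z)) ` W2"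
  have "compact Xd" unfolding Xd_def
    by (rule compact_continuous_image[OF _ cW1]) (intro continuous_intros)
  have "compact Yd" unfolding Yd_def
    by (rule compact_continuous_image[OF _ cW2]) (intro continuous_intros)
  define C1 where "C1 = K \<inter> (Xd \<times> UNIV)"
  define C2 where "C2 = K \<inter> (UNIV \<times> Yd)"
  have clC1: "closed C1" unfolding C1_def using K \<open>compact Xd\<close>
    by (simp add: closed_Int closed_Times compact_imp_closed)
  have clC2: "closed C2" unfolding C2_def using K \<open>compact Yd\<close>
    by (simp add: closed_Int closed_Times compact_imp_closed)
  have C1D: "\<exists>u\<in>K. u \<noteq> p \<and> fst u = fst p" if "p \<in> C1" for p
  proof -
    have "fst p \<in> Xd" using that unfolding C1_def by (auto simp: mem_Times_iff)
    then obtain z where z0: "fst p = fst (fst z)" "z \<in> W1" unfolding Xd_def by (rule imageE)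
    then have z: "z \<in> W1" "fst (fst z) = fst p" by auto
    then have ab: "fst z \<in> K" "snd z \<in> K" "fst (fst z) = fst (snd z)" "fst z \<noteq> snd z"
      using d(1) unfolding W1_def by auto
    show ?thesis
    proof (cases "fst z = p")
      case True then show ?thesis using ab z by (intro bexI[of _ "snd z"]) auto
    next
      case False then show ?thesis using ab z by (intro bexI[of _ "fst z"]) auto
    qed
  qed
  have C2D: "\<exists>u\<in>K. u \<noteq> p \<and> snd u = snd p" if "p \<in> C2" for p
  proof -
    have "snd p \<in> Yd" using that unfolding C2_def by (auto simp: mem_Times_iff)
    then obtain z where z0: "snd p = snd (fst z)" "z \<in> W2" unfolding Yd_def by (rule imageE)
    then have z: "z \<in> W2" "snd (fst z) = snd p" by auto
    then have ab: "fst z \<in> K" "snd z \<in> K" "snd (fst z) = snd (snd z)" "fst z \<noteq> snd z"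
      using d(1) unfolding W2_def by auto
    show ?thesis
    proof (cases "fst z = p")
      case True then show ?thesis using ab z by (intro bexI[of _ "snd z"]) auto
    next
      case False then show ?thesis using ab z by (intro bexI[of _ "fst z"]) auto
    qed
  qed
  have C1sat: "q \<in> C1" if a: "p \<in> C1" "q \<in> K" "R p q" for p q
  proof (cases "fst p = fst q")
    case True then show ?thesis using a unfolding C1_def by (auto simp: mem_Times_iff)
  next
    case False
    then have sq: "snd p = snd q" using a(3) unfolding R_def by auto
    have pK: "p \<in> K" using a(1) unfolding C1_def by auto
    obtain u where "u \<in> K" "u \<noteq> p" "fst u = fst p" using C1D[OF a(1)] by blast
    then have "p = q" using arr_contra1[OF noarr \<open>u \<in> K\<close> pK a(2)] sq by blast
    then show ?thesis using a(1) by simp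
  qed
  have C2sat: "q \<in> C2" if a: "p \<in> C2" "q \<in> K" "R p q" for p q
  proof (cases "snd p = snd q")
    case True then show ?thesis using a unfolding C2_def by (auto simp: mem_Times_iff)
  next
    case False
    then have sq: "fst p = fst q" using a(3) unfolding R_def by auto
    have pK: "p \<in> K" using a(1) unfolding C2_def by auto
    obtain u where "u \<in> K" "u \<noteq> p" "snd u = snd p" using C2D[OF a(1)] by blast
    then have "p = q" using arr_contra2[OF noarr \<open>u \<in> K\<close> pK a(2)] sq by blast
    then show ?thesis using a(1) by simp
  qed
  have disj: "C1 \<inter> C2 = {}"
  proof (rule ccontr)
    assume "C1 \<inter> C2 \<noteq> {}"
    then obtain p where p: "p \<in> C1" "p \<in> C2" by blast
    have pK: "p \<in> K" using p(1) unfolding C1_def by auto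
    obtain u where u: "u \<in> K" "u \<noteq> p" "fst u = fst p" using C1D[OF p(1)] by blast
    obtain v where v: "v \<in> K" "v \<noteq> p" "snd v = snd p" using C2D[OF p(2)] by blast
    show False using arr_contra1[OF noarr u(1) pK v(1) u(2) u(3)] v by auto
  qed
  have shortV: "dist p q < \<delta>" if "p \<in> K" "q \<in> K" "fst p = fst q" "p \<notin> C1" for p q
  proof (rule ccontr)
    assume "\<not> ?thesis"
    then have "(p, q) \<in> W1" using that unfolding W1_def by auto
    then have "fst p \<in> Xd" unfolding Xd_def by force
    then show False using that unfolding C1_def by (auto simp: mem_Times_iff)
  qed
  have shortH: "dist p q < \<delta>" if "p \<in> K" "q \<in> K" "snd p = snd q" "p \<notin> C2" for p q
  proof (rule ccontr)
    assume "\<not> ?thesis"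
    then have "(p, q) \<in> W2" using that unfolding W2_def by auto
    then have "snd p \<in> Yd" unfolding Yd_def by force
    then show False using that unfolding C2_def by (auto simp: mem_Times_iff)
  qed
  obtain l :: "real\<times>real \<Rightarrow> real" where l: "continuous_on K l" "\<forall>p\<in>K. 0 \<le> l p \<and> l p \<le> 1"
      "\<forall>p\<in>C1. l p = 0" "\<forall>p\<in>C2. l p = 1" "\<forall>p\<in>K. \<forall>q\<in>K. R p q \<longrightarrow> l p = l q"
  proof -
    have "\<exists>l::real\<times>real\<Rightarrow>real. continuous_on K l \<and> (\<forall>p\<in>K. 0 \<le> l p \<and> l p \<le> 1) \<and> (\<forall>p\<in>C1. l p = 0)
            \<and> (\<forall>p\<in>C2. l p = 1) \<and> (\<forall>p\<in>K. \<forall>q\<in>K. R p q \<longrightarrow> l p = l q)"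
    proof (rule sat_urysohn[OF K])
      show "\<And>p. p \<in> K \<Longrightarrow> R p p" unfolding R_def by simp
      show "\<And>p q. p \<in> K \<Longrightarrow> q \<in> K \<Longrightarrow> R p q \<Longrightarrow> R q p" unfolding R_def by auto
      show "\<And>p q r. p \<in> K \<Longrightarrow> q \<in> K \<Longrightarrow> r \<in> K \<Longrightarrow> R p q \<Longrightarrow> R q r \<Longrightarrow> R p r"
        by (rule Rtrans)
      show "\<And>F. compact F \<Longrightarrow> F \<subseteq> K \<Longrightarrow> closed {p\<in>K. \<exists>q\<in>F. R p q}" by (rule satc)
      show "closed C1" "closed C2" by (fact clC1, fact clC2)
      show "C1 \<subseteq> K" "C2 \<subseteq> K" unfolding C1_def C2_def by auto
      show "\<And>p q. p \<in> C1 \<Longrightarrow> q \<in> K \<Longrightarrow> R p q \<Longrightarrow> q \<in> C1" by (rule C1sat)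
      show "\<And>p q. p \<in> C2 \<Longrightarrow> q \<in> K \<Longrightarrow> R p q \<Longrightarrow> q \<in> C2" by (rule C2sat)
      show "C1 \<inter> C2 = {}" by (fact disj)
    qed
    then show ?thesis using that by blast
  qed
  define D1 where "D1 = (\<lambda>p. (fst p, l p * f p)) ` K"
  have "compact D1" unfolding D1_def
    by (rule compact_continuous_image[OF _ K]) (intro continuous_intros l(1) fc)
  moreover have "D1 \<noteq> {}" unfolding D1_def using Kne by simp
  moreover have "\<bar>snd a - snd b\<bar> \<le> \<epsilon>" if ab: "a \<in> D1" "b \<in> D1" "fst a = fst b" for a b
  proof -
    obtain p q where pq: "p \<in> K" "q \<in> K" "a = (fst p, l p * f p)" "b = (fst q, l q * f q)"
      using ab(1,2) unfolding D1_def by blast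
    have fpq: "fst p = fst q" using ab(3) pq by simp
    have lpq: "l p = l q" using l(5) pq(1,2) fpq unfolding R_def by blast
    show ?thesis
    proof (cases "p \<in> C1")
      case True
      then show ?thesis using l(3) lpq pq ep by simp
    next
      case False
      then have "\<bar>f p - f q\<bar> \<le> \<epsilon>" using d(2)[OF pq(1,2) shortV[OF pq(1,2) fpq False]] by simp
      then show ?thesis using scale_le[of "l p" "f p" "f q" \<epsilon>] l(2) pq lpq by simp
    qed
  qed
  moreover have "\<bar>snd a\<bar> \<le> M" if ab: "a \<in> D1" for a
  proof -
    obtain p where p: "p \<in> K" "a = (fst p, l p * f p)" using ab unfolding D1_def by blast
    have "\<bar>l p * f p\<bar> = \<bar>l p\<bar> * \<bar>f p\<bar>" by (simp add: abs_mult)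
    also have "\<dots> \<le> 1 * M" using l(2) p(1) fM[OF p(1)] by (intro mult_mono) auto
    finally show ?thesis using p by simp
  qed
  ultimately obtain g :: "real \<Rightarrow> real" where g: "continuous_on UNIV g" "\<forall>x. \<bar>g x\<bar> \<le> M"
      "\<forall>a\<in>D1. \<bar>g (fst a) - snd a\<bar> \<le> \<epsilon> + \<epsilon>"
    using approx_fun[of D1 \<epsilon> \<epsilon> M] ep by blast
  have gK: "\<bar>g (fst p) - l p * f p\<bar> \<le> 2 * \<epsilon>" if "p \<in> K" for p
    using g(3) that unfolding D1_def by auto
  have gfst: "continuous_on K (\<lambda>p. g (fst p))"
    using continuous_on_compose[OF continuous_on_fst[OF continuous_on_id] continuous_on_subset[OF g(1) subset_UNIV]]
    by (simp add: o_def)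
  define D2 where "D2 = (\<lambda>p. (snd p, f p - g (fst p))) ` K"
  have "compact D2" unfolding D2_def
    by (rule compact_continuous_image[OF _ K]) (intro continuous_intros gfst fc)
  moreover have "D2 \<noteq> {}" unfolding D2_def using Kne by simp
  moreover have "\<bar>snd a - snd b\<bar> \<le> 5 * \<epsilon>" if ab: "a \<in> D2" "b \<in> D2" "fst a = fst b" for a b
  proof -
    obtain p q where pq: "p \<in> K" "q \<in> K" "a = (snd p, f p - g (fst p))" "b = (snd q, f q - g (fst q))"
      using ab(1,2) unfolding D2_def by blast
    have spq: "snd p = snd q" using ab(3) pq by simp
    have lpq: "l p = l q" using l(5) pq(1,2) spq unfolding R_def by blast
    have t1: "\<bar>(1 - l p) * f p - (1 - l p) * f q\<bar> \<le> \<epsilon>"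
    proof (cases "p \<in> C2")
      case True
      then show ?thesis using l(4) ep by simp
    next
      case False
      then have "\<bar>f p - f q\<bar> \<le> \<epsilon>" using d(2)[OF pq(1,2) shortH[OF pq(1,2) spq False]] by simp
      then show ?thesis using scale_le[of "1 - l p" "f p" "f q" \<epsilon>] l(2) pq by simp
    qed
    have "snd a - snd b = ((1 - l p) * f p - (1 - l p) * f q) - (g (fst p) - l p * f p) + (g (fst q) - l q * f q)"
      using pq lpq by (simp add: algebra_simps)
    then show ?thesis using t1 gK[OF pq(1)] gK[OF pq(2)] by linarith
  qed
  moreover have "\<bar>snd a\<bar> \<le> 2 * M" if ab: "a \<in> D2" for a
  proof -
    obtain p where p: "p \<in> K" "a = (snd p, f p - g (fst p))" using ab unfolding D2_def by blast
    show ?thesis using p fM[OF p(1)] g(2)[rule_format, of "fst p"] by simp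
  qed
  ultimately obtain h :: "real \<Rightarrow> real" where h: "continuous_on UNIV h" "\<forall>x. \<bar>h x\<bar> \<le> 2 * M"
      "\<forall>a\<in>D2. \<bar>h (fst a) - snd a\<bar> \<le> 5 * \<epsilon> + \<epsilon>"
    using approx_fun[of D2 "5 * \<epsilon>" \<epsilon> "2 * M"] ep by blast
  have err: "\<forall>(x, y)\<in>K. \<bar>f (x, y) - g x - h y\<bar> \<le> 6 * \<epsilon>"
  proof clarify
    fix x y assume "(x, y) \<in> K"
    then have "\<bar>h y - (f (x, y) - g x)\<bar> \<le> 5 * \<epsilon> + \<epsilon>" using h(3) unfolding D2_def by force
    then show "\<bar>f (x, y) - g x - h y\<bar> \<le> 6 * \<epsilon>" by linarith
  qed
  have bg: "bounded (range g)" unfolding bounded_iff using g(2) by auto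
  have bh: "bounded (range h)" unfolding bounded_iff using h(2) by auto
  have ng: "sup_norm_on UNIV g \<le> M" unfolding sup_norm_on_def
    using g(2) by (simp add: cSUP_least)
  have nh: "sup_norm_on UNIV h \<le> 2 * M" unfolding sup_norm_on_def
    using h(2) by (simp add: cSUP_least)
  have "continuous_on UNIV g \<and> continuous_on UNIV h \<and>
           (\<forall>(x, y)\<in>K. \<bar>f (x, y) - g x - h y\<bar> \<le> 6 * \<epsilon>) \<and>
           bounded (range g) \<and> bounded (range h) \<and>
           sup_norm_on UNIV g \<le> sup_norm_on K f \<and>
           sup_norm_on UNIV h \<le> 2 * sup_norm_on K f"
    using g(1) h(1) err bg bh ng nh unfolding M_def by blast
  then show ?thesis by (intro exI[where x=g] exI[where x=h])
qed

end
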